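(* Let $p\geq 1$, let $X$ be a random vector in $\mathbb{R}^d$ with $\mathbb{E}|X|^p<\infty$, and let $X'$ be an independent copy of $X$. If $X-X'$ satisfies $\mathrm{SMP}_p(\kappa)$ for some $\kappa>0$, then $X$ satisfies $\mathrm{SMP}_p(\min\{1/2,\kappa/4\})$.
   Context: For a real random variable $Y$ and $p>0$, $\|Y\|_p:=(\mathbb{E}|Y|^p)^{1/p}$; $\langle\cdot,\cdot\rangle$ is the standard inner product on $\mathbb{R}^d$ and $|\cdot|$ the Euclidean norm. A random vector $X$ in $\mathbb{R}^d$ satisfies the $L_p$-Sudakov minoration principle with constant $\kappa>0$, written $\mathrm{SMP}_p(\kappa)$, if for every $A>0$ and every set $T\subset\mathbb{R}^d$ with $|T|\geq e^p$ (cardinality) such that $\|\langle t-s,X\rangle\|_p\geq A$ for all distinct $s,t\in T$, one has $\mathbb{E}\sup_{t,s\in T}\langle t-s,X\rangle\geq \kappa A$. $X$ satisfies $\mathrm{SMP}(\kappa)$ if it satisfies $\mathrm{SMP}_p(\kappa)$ for every $p\geq 1$. *)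

theory Defs
  imports "HOL-Probability.Probability"
begin

definition Lp_norm :: "'a measure \<Rightarrow> ('a \<Rightarrow> real) \<Rightarrow> real \<Rightarrow> real" where
  "Lp_norm M Y p = (\<integral>\<omega>. \<bar>Y \<omega>\<bar> powr p \<partial>M) powr (1 / p)"

text \<open>The expectation of the (nonnegative, since t = s is allowed) supremum is taken as a
  nonnegative integral, so that it makes sense for arbitrary (also infinite) sets T.\<close>
definition SMP_p :: "'a measure \<Rightarrow> ('a \<Rightarrow> 'd::euclidean_space) \<Rightarrow> real \<Rightarrow> real \<Rightarrow> bool" where
  "SMP_p M X p \<kappa> \<longleftrightarrow>
     (\<forall>A>0. \<forall>T :: 'd set.
        (infinite T \<or> exp p \<le> real (card T)) \<longrightarrow>
        (\<forall>s\<in>T. \<forall>t\<in>T. s \<noteq> t \<longrightarrow> Lp_norm M (\<lambda>\<omega>. (t - s) \<bullet> X \<omega>) p \<ge> A) \<longrightarrow>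
        (\<integral>\<^sup>+ \<omega>. (\<Squnion>t\<in>T. \<Squnion>s\<in>T. ennreal ((t - s) \<bullet> X \<omega>)) \<partial>M) \<ge> ennreal (\<kappa> * A))"

end

theory Submission
  imports Defs
begin

lemma powr_convex0:
  fixes x y t p :: real
  assumes "p \<ge> 1" "x \<ge> 0" "y \<ge> 0" "0 \<le> t" "t \<le> 1"
  shows "((1-t)*x + t*y) powr p \<le> (1-t) * x powr p + t * y powr p"
proof -
  have tp: "s powr p \<le> s" if "0 \<le> s" "s \<le> 1" for s :: real
    using that assms(1) powr_le_one_le[of s p] by (cases "s = 0") auto
  show ?thesis
  proof (cases "x = 0")
    case True
    have "(t*y) powr p = t powr p * y powr p" using assms by (simp add: powr_mult)
    also have "\<dots> \<le> t * y powr p" using tp[of t] assms by (intro mult_right_mono) auto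
    finally show ?thesis using True assms by simp
  next
    case x: False
    show ?thesis
    proof (cases "y = 0")
      case True
      have "((1-t)*x) powr p = (1-t) powr p * x powr p" using assms by (simp add: powr_mult)
      also have "\<dots> \<le> (1-t) * x powr p" using tp[of "1-t"] assms by (intro mult_right_mono) auto
      finally show ?thesis using True assms by simp
    next
      case False
      show ?thesis using convex_onD[OF powr_convex[OF assms(1)], of t x y] x False assms by simp
    qed
  qed
qed

lemma convex_abs_powr:
  fixes a p :: real assumes "p \<ge> 1"
  shows "convex_on UNIV (\<lambda>z. \<bar>a - z\<bar> powr p)"
proof (rule convex_onI)
  fix t x y :: real assume t: "0 < t" "t < 1"
  have "\<bar>a - ((1-t)*x + t*y)\<bar> = \<bar>(1-t)*(a-x) + t*(a-y)\<bar>" by (simp add: algebra_simps)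
  also have "\<dots> \<le> (1-t)*\<bar>a-x\<bar> + t*\<bar>a-y\<bar>" using t
    by (simp add: abs_mult abs_triangle_ineq[THEN order_trans])
  finally have "\<bar>a - ((1-t)*x + t*y)\<bar> powr p \<le> ((1-t)*\<bar>a-x\<bar> + t*\<bar>a-y\<bar>) powr p"
    using assms by (intro powr_mono2) auto
  also have "\<dots> \<le> (1-t) * \<bar>a-x\<bar> powr p + t * \<bar>a-y\<bar> powr p"
    using t assms by (intro powr_convex0) auto
  finally show "\<bar>a - ((1-t) *\<^sub>R x + t *\<^sub>R y)\<bar> powr p \<le> (1-t) * \<bar>a-x\<bar> powr p + t * \<bar>a-y\<bar> powr p" by simp
qed simp

lemma abs_add_powr_le:
  fixes a b p :: real assumes "p \<ge> 1"
  shows "\<bar>a + b\<bar> powr p \<le> 2 powr (p-1) * (\<bar>a\<bar> powr p + \<bar>b\<bar> powr p)"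
proof -
  have "\<bar>a + b\<bar> powr p \<le> (2 * ((1-1/2)*\<bar>a\<bar> + (1/2)*\<bar>b\<bar>)) powr p"
    using assms by (intro powr_mono2) (auto simp: abs_triangle_ineq)
  also have "\<dots> = 2 powr p * ((1-1/2)*\<bar>a\<bar> + (1/2)*\<bar>b\<bar>) powr p"
    by (rule powr_mult)
  also have "\<dots> \<le> 2 powr p * ((1-1/2)*\<bar>a\<bar> powr p + (1/2)*\<bar>b\<bar> powr p)"
    using assms by (intro mult_left_mono powr_convex0) auto
  also have "\<dots> = 2 powr (p-1) * (\<bar>a\<bar> powr p + \<bar>b\<bar> powr p)"
    by (simp add: powr_diff field_simps)
  finally show ?thesis .
qed

lemma intpow:
  fixes Z :: "'a \<Rightarrow> 'd::euclidean_space"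
  assumes "prob_space M" "p \<ge> 1" "Z \<in> borel_measurable M"
    "integrable M (\<lambda>\<omega>. norm (Z \<omega>) powr p)"
  shows "integrable M (\<lambda>\<omega>. \<bar>u \<bullet> Z \<omega> - c\<bar> powr p)"
proof -
  interpret prob_space M by fact
  have "integrable M (\<lambda>\<omega>. 2 powr (p-1) * (norm u powr p * norm (Z \<omega>) powr p + \<bar>c\<bar> powr p))"
    using assms by (intro integrable_mult_right integrable_add integrable_const) auto
  then show ?thesis
  proof (rule Bochner_Integration.integrable_bound)
    show "(\<lambda>\<omega>. \<bar>u \<bullet> Z \<omega> - c\<bar> powr p) \<in> borel_measurable M" using assms(3) by measurable
    show "AE \<omega> in M. norm (\<bar>u \<bullet> Z \<omega> - c\<bar> powr p) \<le> norm (2 powr (p-1) * (norm u powr p * norm (Z \<omega>) powr p + \<bar>c\<bar> powr p))"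
    proof (rule AE_I2)
      fix \<omega>
      have "\<bar>u \<bullet> Z \<omega> - c\<bar> powr p \<le> 2 powr (p-1) * (\<bar>u \<bullet> Z \<omega>\<bar> powr p + \<bar>-c\<bar> powr p)"
        using abs_add_powr_le[OF assms(2), of "u \<bullet> Z \<omega>" "-c"] by simp
      also have "\<dots> \<le> 2 powr (p-1) * (norm u powr p * norm (Z \<omega>) powr p + \<bar>c\<bar> powr p)"
      proof -
        have "\<bar>u \<bullet> Z \<omega>\<bar> powr p \<le> (norm u * norm (Z \<omega>)) powr p"
          using assms(2) by (intro powr_mono2) (auto simp: Cauchy_Schwarz_ineq2)
        then show ?thesis by (simp add: powr_mult)
      qed
      finally show "norm (\<bar>u \<bullet> Z \<omega> - c\<bar> powr p) \<le> norm (2 powr (p-1) * (norm u powr p * norm (Z \<omega>) powr p + \<bar>c\<bar> powr p))"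
        by simp
    qed
  qed
qed

lemma intnorm:
  fixes Z :: "'a \<Rightarrow> 'd::euclidean_space"
  assumes "prob_space M" "p \<ge> 1" "Z \<in> borel_measurable M"
    "integrable M (\<lambda>\<omega>. norm (Z \<omega>) powr p)"
  shows "integrable M Z"
proof -
  interpret prob_space M by fact
  have "integrable M (\<lambda>\<omega>. 1 + norm (Z \<omega>) powr p)"
    using assms by auto
  then show ?thesis
  proof (rule Bochner_Integration.integrable_bound)
    show "Z \<in> borel_measurable M" by fact
    show "AE \<omega> in M. norm (Z \<omega>) \<le> norm (1 + norm (Z \<omega>) powr p)"
    proof (rule AE_I2)
      fix \<omega>
      have "norm (Z \<omega>) \<le> 1 + norm (Z \<omega>) powr p"
      proof (cases "norm (Z \<omega>) \<le> 1")
        case False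
        then have "norm (Z \<omega>) powr 1 \<le> norm (Z \<omega>) powr p" using assms(2)
          by (intro powr_mono) auto
        then show ?thesis by simp
      qed (auto intro: order_trans[OF _ less_imp_le[OF less_add_one]] add_increasing2)
      then show "norm (Z \<omega>) \<le> norm (1 + norm (Z \<omega>) powr p)" by simp
    qed
  qed
qed

lemma jensen_indep:
  fixes M :: "'a measure" and X X' :: "'a \<Rightarrow> 'd::euclidean_space"
  assumes "prob_space M"
    and p: "p \<ge> 1"
    and [measurable]: "X \<in> borel_measurable M" and [measurable]: "X' \<in> borel_measurable M"
    and intX: "integrable M (\<lambda>\<omega>. norm (X \<omega>) powr p)"
    and ind: "prob_space.indep_var M borel X borel X'"
    and dist: "distr M borel X' = distr M borel X"
  shows "(\<integral>\<omega>. \<bar>u \<bullet> X \<omega> - u \<bullet> prob_space.expectation M X\<bar> powr p \<partial>M)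
          \<le> (\<integral>\<omega>. \<bar>u \<bullet> X \<omega> - u \<bullet> X' \<omega>\<bar> powr p \<partial>M)"
proof -
  interpret prob_space M by fact
  define N where "N = distr M borel X"
  interpret N: prob_space N unfolding N_def by (rule prob_space_distr) simp
  define c where "c = u \<bullet> expectation X"
  have intX': "integrable M (\<lambda>\<omega>. norm (X' \<omega>) powr p)"
  proof -
    have "integrable (distr M borel X) (\<lambda>x. norm x powr p)"
      using intX by (subst integrable_distr_eq) auto
    then have "integrable (distr M borel X') (\<lambda>x. norm x powr p)" using dist by simp
    then show ?thesis by (subst (asm) integrable_distr_eq) auto
  qed
  have sp[simp]: "space N = UNIV" "sets N = sets borel" unfolding N_def by auto
  have EN: "N.expectation (\<lambda>y. u \<bullet> y) = c"
    unfolding N_def c_def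
    using intnorm[OF \<open>prob_space M\<close> p _ intX]
    by (subst integral_distr) auto
  have intNu: "integrable N (\<lambda>y. u \<bullet> y)"
    unfolding N_def using intnorm[OF \<open>prob_space M\<close> p _ intX]
    by (subst integrable_distr_eq) auto
  have intNx: "integrable N (\<lambda>y. \<bar>u \<bullet> x - u \<bullet> y\<bar> powr p)" for x
    unfolding N_def
    using intpow[OF \<open>prob_space M\<close> p _ intX, of u "u \<bullet> x"]
    by (subst integrable_distr_eq) (auto simp: abs_minus_commute)
  have pt: "ennreal (\<bar>u \<bullet> x - c\<bar> powr p) \<le> (\<integral>\<^sup>+ y. ennreal (\<bar>u \<bullet> x - u \<bullet> y\<bar> powr p) \<partial>N)" for x
  proof -
    have "\<bar>u \<bullet> x - N.expectation (\<lambda>y. u \<bullet> y)\<bar> powr p \<le> N.expectation (\<lambda>y. \<bar>u \<bullet> x - u \<bullet> y\<bar> powr p)"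
      by (rule N.jensens_inequality[where I=UNIV]) (auto intro: intNu intNx convex_abs_powr p)
    then show ?thesis using EN
      by (subst nn_integral_eq_integral[OF intNx]) auto
  qed
  have "(\<integral>\<^sup>+ \<omega>. ennreal (\<bar>u \<bullet> X \<omega> - c\<bar> powr p) \<partial>M) = (\<integral>\<^sup>+ x. ennreal (\<bar>u \<bullet> x - c\<bar> powr p) \<partial>N)"
    unfolding N_def by (subst nn_integral_distr) auto
  also have "\<dots> \<le> (\<integral>\<^sup>+ x. \<integral>\<^sup>+ y. ennreal (\<bar>u \<bullet> x - u \<bullet> y\<bar> powr p) \<partial>N \<partial>N)"
    by (intro nn_integral_mono pt)
  also have "\<dots> = (\<integral>\<^sup>+ z. ennreal (\<bar>u \<bullet> fst z - u \<bullet> snd z\<bar> powr p) \<partial>(N \<Otimes>\<^sub>M N))"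
    using N.nn_integral_fst[of "\<lambda>z. ennreal (\<bar>u \<bullet> fst z - u \<bullet> snd z\<bar> powr p)" N]
    by (simp add: N_def)
  also have "N \<Otimes>\<^sub>M N = distr M (borel \<Otimes>\<^sub>M borel) (\<lambda>\<omega>. (X \<omega>, X' \<omega>))"
    using ind unfolding indep_var_distribution_eq N_def dist[symmetric] by simp
  also have "(\<integral>\<^sup>+ z. ennreal (\<bar>u \<bullet> fst z - u \<bullet> snd z\<bar> powr p) \<partial>\<dots>)
      = (\<integral>\<^sup>+ \<omega>. ennreal (\<bar>u \<bullet> X \<omega> - u \<bullet> X' \<omega>\<bar> powr p) \<partial>M)"
    by (subst nn_integral_distr) auto
  finally have le: "(\<integral>\<^sup>+ \<omega>. ennreal (\<bar>u \<bullet> X \<omega> - c\<bar> powr p) \<partial>M)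
      \<le> (\<integral>\<^sup>+ \<omega>. ennreal (\<bar>u \<bullet> X \<omega> - u \<bullet> X' \<omega>\<bar> powr p) \<partial>M)" .
  have i1: "integrable M (\<lambda>\<omega>. \<bar>u \<bullet> X \<omega> - c\<bar> powr p)"
    by (rule intpow[OF \<open>prob_space M\<close> p _ intX]) simp
  have i2: "integrable M (\<lambda>\<omega>. \<bar>u \<bullet> X \<omega> - u \<bullet> X' \<omega>\<bar> powr p)"
  proof (rule Bochner_Integration.integrable_bound)
    show "integrable M (\<lambda>\<omega>. 2 powr (p-1) * (\<bar>u \<bullet> X \<omega> - 0\<bar> powr p + \<bar>u \<bullet> X' \<omega> - 0\<bar> powr p))"
      using intpow[OF \<open>prob_space M\<close> p _ intX, of u 0] intpow[OF \<open>prob_space M\<close> p _ intX', of u 0]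
      by (intro integrable_mult_right integrable_add) auto
    show "(\<lambda>\<omega>. \<bar>u \<bullet> X \<omega> - u \<bullet> X' \<omega>\<bar> powr p) \<in> borel_measurable M" by measurable
    show "AE \<omega> in M. norm (\<bar>u \<bullet> X \<omega> - u \<bullet> X' \<omega>\<bar> powr p) \<le> norm (2 powr (p-1) * (\<bar>u \<bullet> X \<omega> - 0\<bar> powr p + \<bar>u \<bullet> X' \<omega> - 0\<bar> powr p))"
      using abs_add_powr_le[OF p, of "u \<bullet> X _" "- (u \<bullet> X' _)"] by simp
  qed
  have e1: "(\<integral>\<^sup>+ \<omega>. ennreal (\<bar>u \<bullet> X \<omega> - c\<bar> powr p) \<partial>M) = ennreal (\<integral>\<omega>. \<bar>u \<bullet> X \<omega> - c\<bar> powr p \<partial>M)"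
    by (rule nn_integral_eq_integral[OF i1]) auto
  have e2: "(\<integral>\<^sup>+ \<omega>. ennreal (\<bar>u \<bullet> X \<omega> - u \<bullet> X' \<omega>\<bar> powr p) \<partial>M) = ennreal (\<integral>\<omega>. \<bar>u \<bullet> X \<omega> - u \<bullet> X' \<omega>\<bar> powr p \<partial>M)"
    by (rule nn_integral_eq_integral[OF i2]) auto
  have "ennreal (\<integral>\<omega>. \<bar>u \<bullet> X \<omega> - c\<bar> powr p \<partial>M) \<le> ennreal (\<integral>\<omega>. \<bar>u \<bullet> X \<omega> - u \<bullet> X' \<omega>\<bar> powr p \<partial>M)"
    using le by (simp only: e1 e2)
  moreover have "0 \<le> (\<integral>\<omega>. \<bar>u \<bullet> X \<omega> - u \<bullet> X' \<omega>\<bar> powr p \<partial>M)"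
    by (rule integral_nonneg_AE) auto
  ultimately have "(\<integral>\<omega>. \<bar>u \<bullet> X \<omega> - c\<bar> powr p \<partial>M) \<le> (\<integral>\<omega>. \<bar>u \<bullet> X \<omega> - u \<bullet> X' \<omega>\<bar> powr p \<partial>M)"
    using ennreal_le_iff by blast
  then show ?thesis unfolding c_def .
qed

lemma ennreal_add_le: "ennreal (a + b) \<le> ennreal a + ennreal b"
proof -
  have "ennreal (a + b) \<le> ennreal (max 0 a + max 0 b)" by (intro ennreal_leI) auto
  also have "\<dots> = ennreal (max 0 a) + ennreal (max 0 b)" by (intro ennreal_plus) auto
  also have "\<dots> = ennreal a + ennreal b" by (simp add: ennreal_max_0)
  finally show ?thesis .
qed

lemma pair_bound:
  fixes M :: "'a measure" and X X' :: "'a \<Rightarrow> 'd::euclidean_space"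
    and p \<kappa> :: real
  assumes "prob_space M"
    and p: "p \<ge> 1"
    and [measurable]: "X \<in> borel_measurable M" and [measurable]: "X' \<in> borel_measurable M"
    and intX: "integrable M (\<lambda>\<omega>. norm (X \<omega>) powr p)"
    and ind: "prob_space.indep_var M borel X borel X'"
    and dist: "distr M borel X' = distr M borel X"
    and A: "A > 0"
    and hA: "Lp_norm M (\<lambda>\<omega>. u \<bullet> X \<omega>) p \<ge> A"
    and hc: "\<bar>u \<bullet> prob_space.expectation M X\<bar> < A / 2"
  shows "Lp_norm M (\<lambda>\<omega>. u \<bullet> (X \<omega> - X' \<omega>)) p \<ge> A / 2"
proof -
  interpret prob_space M by fact
  define c where "c = u \<bullet> expectation X"
  define I0 where "I0 = (\<integral>\<omega>. \<bar>u \<bullet> X \<omega>\<bar> powr p \<partial>M)"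
  define I1 where "I1 = (\<integral>\<omega>. \<bar>u \<bullet> X \<omega> - c\<bar> powr p \<partial>M)"
  define I2 where "I2 = (\<integral>\<omega>. \<bar>u \<bullet> X \<omega> - u \<bullet> X' \<omega>\<bar> powr p \<partial>M)"
  have I0nn: "I0 \<ge> 0" unfolding I0_def by (rule integral_nonneg_AE) auto
  have I2nn: "I2 \<ge> 0" unfolding I2_def by (rule integral_nonneg_AE) auto
  have "I0 powr (1/p) \<ge> A" using hA unfolding Lp_norm_def I0_def .
  then have I0pos: "I0 > 0" using A I0nn by (cases "I0 = 0") auto
  have "A powr p \<le> (I0 powr (1/p)) powr p"
    using \<open>I0 powr (1/p) \<ge> A\<close> A p by (intro powr_mono2) auto
  also have "\<dots> = I0" using I0pos p by (simp add: powr_powr)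
  finally have AI0: "A powr p \<le> I0" .
  have i1: "integrable M (\<lambda>\<omega>. \<bar>u \<bullet> X \<omega> - c\<bar> powr p)"
    by (rule intpow[OF \<open>prob_space M\<close> p _ intX]) simp
  have "I0 \<le> (\<integral>\<omega>. 2 powr (p-1) * (\<bar>u \<bullet> X \<omega> - c\<bar> powr p + \<bar>c\<bar> powr p) \<partial>M)"
    unfolding I0_def
  proof (rule integral_mono)
    show "integrable M (\<lambda>\<omega>. \<bar>u \<bullet> X \<omega>\<bar> powr p)"
      using intpow[OF \<open>prob_space M\<close> p _ intX, of u 0] by simp
    show "integrable M (\<lambda>\<omega>. 2 powr (p-1) * (\<bar>u \<bullet> X \<omega> - c\<bar> powr p + \<bar>c\<bar> powr p))"
      using i1 by auto
    show "\<bar>u \<bullet> X \<omega>\<bar> powr p \<le> 2 powr (p-1) * (\<bar>u \<bullet> X \<omega> - c\<bar> powr p + \<bar>c\<bar> powr p)" for \<omega>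
      using abs_add_powr_le[OF p, of "u \<bullet> X \<omega> - c" c] by simp
  qed
  also have "\<dots> = 2 powr (p-1) * (I1 + \<bar>c\<bar> powr p)"
    unfolding I1_def using i1 by (simp add: prob_space)
  finally have h1: "I0 \<le> 2 powr (p-1) * (I1 + \<bar>c\<bar> powr p)" .
  have h2: "I1 \<le> I2" unfolding I1_def I2_def c_def
    by (rule jensen_indep[OF \<open>prob_space M\<close> p _ _ intX ind dist]) auto
  have h3: "\<bar>c\<bar> powr p < (A/2) powr p" using hc p unfolding c_def
    by (intro powr_less_mono2) auto
  define B where "B = (A/2) powr p"
  define P where "P = 2 powr p"
  have Ppos: "P > 0" unfolding P_def by simp
  have eA: "A powr p = P * B" unfolding P_def B_def using A by (simp add: powr_mult[symmetric])
  have e2: "2 powr (p-1) = P / 2" unfolding P_def by (simp add: powr_diff)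
  have "P * B \<le> I0" using AI0 eA by linarith
  also have "I0 \<le> P / 2 * (I1 + \<bar>c\<bar> powr p)" using h1 unfolding e2 .
  also have "\<dots> \<le> P / 2 * (I2 + \<bar>c\<bar> powr p)"
    using h2 Ppos by (intro mult_left_mono) auto
  finally have le1: "P * B \<le> P / 2 * (I2 + \<bar>c\<bar> powr p)" .
  have "P * (2 * B) \<le> P * (I2 + \<bar>c\<bar> powr p)"
  proof -
    have "P * (2 * B) = 2 * (P * B)" by simp
    also have "\<dots> \<le> 2 * (P / 2 * (I2 + \<bar>c\<bar> powr p))" using le1 by linarith
    also have "\<dots> = P * (I2 + \<bar>c\<bar> powr p)" by simp
    finally show ?thesis .
  qed
  then have "2 * B \<le> I2 + \<bar>c\<bar> powr p" using mult_le_cancel_left_pos[OF Ppos] by blast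
  then have "B \<le> I2" using h3[folded B_def] by linarith
  then have "B powr (1/p) \<le> I2 powr (1/p)" using p unfolding B_def by (intro powr_mono2) auto
  moreover have "B powr (1/p) = A/2" unfolding B_def using A p by (simp add: powr_powr)
  ultimately show ?thesis unfolding Lp_norm_def I2_def by (simp add: inner_diff_right)
qed

lemma main_countable:
  fixes M :: "'a measure" and X X' :: "'a \<Rightarrow> 'd::euclidean_space"
    and p \<kappa> :: real
  assumes "prob_space M"
    and p: "p \<ge> 1"
    and [measurable]: "X \<in> borel_measurable M" and [measurable]: "X' \<in> borel_measurable M"
    and intX: "integrable M (\<lambda>\<omega>. norm (X \<omega>) powr p)"
    and ind: "prob_space.indep_var M borel X borel X'"
    and dist: "distr M borel X' = distr M borel X"
    and kp: "\<kappa> > 0"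
    and smp: "SMP_p M (\<lambda>\<omega>. X \<omega> - X' \<omega>) p \<kappa>"
    and A: "A > 0" and cT: "countable T"
    and card: "infinite T \<or> exp p \<le> real (card T)"
    and hT: "\<forall>s\<in>T. \<forall>t\<in>T. s \<noteq> t \<longrightarrow> Lp_norm M (\<lambda>\<omega>. (t - s) \<bullet> X \<omega>) p \<ge> A"
  shows "ennreal (min (1/2) (\<kappa>/4) * A) \<le> (\<integral>\<^sup>+ \<omega>. (\<Squnion>t\<in>T. \<Squnion>s\<in>T. ennreal ((t - s) \<bullet> X \<omega>)) \<partial>M)"
proof -
  interpret prob_space M by fact
  define m where "m = expectation X"
  define F where "F = (\<lambda>x. \<Squnion>t\<in>T. \<Squnion>s\<in>T. ennreal ((t - s) \<bullet> (x::'d)))"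
  have Fm[measurable]: "F \<in> borel_measurable borel" unfolding F_def
    by (intro borel_measurable_SUP cT) auto
  have iX: "integrable M X" by (rule intnorm[OF \<open>prob_space M\<close> p _ intX]) simp
  show ?thesis
  proof (cases "\<exists>s\<in>T. \<exists>t\<in>T. (t - s) \<bullet> m \<ge> A/2")
    case True
    then obtain s t where st: "s \<in> T" "t \<in> T" "(t - s) \<bullet> m \<ge> A/2" by auto
    have "(t - s) \<bullet> m = (\<integral>\<omega>. (t - s) \<bullet> X \<omega> \<partial>M)" unfolding m_def using iX by simp
    also have "\<dots> \<le> (\<integral>\<omega>. max 0 ((t - s) \<bullet> X \<omega>) \<partial>M)"
      using iX by (intro integral_mono) auto
    finally have "ennreal ((t - s) \<bullet> m) \<le> ennreal (\<integral>\<omega>. max 0 ((t - s) \<bullet> X \<omega>) \<partial>M)"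
      by (rule ennreal_leI)
    also have "\<dots> = (\<integral>\<^sup>+\<omega>. ennreal (max 0 ((t - s) \<bullet> X \<omega>)) \<partial>M)"
      using iX by (intro nn_integral_eq_integral[symmetric]) auto
    also have "\<dots> = (\<integral>\<^sup>+\<omega>. ennreal ((t - s) \<bullet> X \<omega>) \<partial>M)" by (simp add: ennreal_max_0)
    also have "\<dots> \<le> (\<integral>\<^sup>+ \<omega>. (\<Squnion>t\<in>T. \<Squnion>s\<in>T. ennreal ((t - s) \<bullet> X \<omega>)) \<partial>M)"
      using st by (intro nn_integral_mono SUP_upper2[OF st(2)] SUP_upper2[OF st(1)]) auto
    finally have "ennreal ((t - s) \<bullet> m) \<le> (\<integral>\<^sup>+ \<omega>. (\<Squnion>t\<in>T. \<Squnion>s\<in>T. ennreal ((t - s) \<bullet> X \<omega>)) \<partial>M)" .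
    moreover have "min (1/2) (\<kappa>/4) * A \<le> (t - s) \<bullet> m"
    proof -
      have "min (1/2) (\<kappa>/4) * A \<le> 1/2 * A" using A by (intro mult_right_mono) auto
      then show ?thesis using st by linarith
    qed
    ultimately show ?thesis by (meson ennreal_leI order_trans)
  next
    case False
    have pairs: "Lp_norm M (\<lambda>\<omega>. (t - s) \<bullet> (X \<omega> - X' \<omega>)) p \<ge> A/2"
      if "s \<in> T" "t \<in> T" "s \<noteq> t" for s t
    proof (rule pair_bound[OF \<open>prob_space M\<close> p _ _ intX ind dist A])
      show "Lp_norm M (\<lambda>\<omega>. (t - s) \<bullet> X \<omega>) p \<ge> A" using hT that by auto
      have "\<not> A/2 \<le> (t - s) \<bullet> m" "\<not> A/2 \<le> (s - t) \<bullet> m" using False that by blast+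
      then have "(t - s) \<bullet> m < A/2" "(s - t) \<bullet> m < A/2" by linarith+
      moreover have neg: "(s - t) \<bullet> m = - ((t - s) \<bullet> m)" by (simp add: inner_diff_left)
      ultimately have "\<bar>(t - s) \<bullet> m\<bar> < A / 2" unfolding abs_less_iff by linarith
      then show "\<bar>(t - s) \<bullet> expectation X\<bar> < A / 2" unfolding m_def .
    qed auto
    have "ennreal (\<kappa> * (A/2)) \<le> (\<integral>\<^sup>+ \<omega>. (\<Squnion>t\<in>T. \<Squnion>s\<in>T. ennreal ((t - s) \<bullet> (X \<omega> - X' \<omega>))) \<partial>M)"
      apply (rule smp[unfolded SMP_p_def, rule_format, of "A/2" T])
      using A card pairs by auto
    also have "\<dots> \<le> (\<integral>\<^sup>+ \<omega>. F (X \<omega>) + F (X' \<omega>) \<partial>M)"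
    proof (intro nn_integral_mono SUP_least)
      fix \<omega> s t assume st: "t \<in> T" "s \<in> T"
      have "ennreal ((t - s) \<bullet> (X \<omega> - X' \<omega>)) = ennreal ((t - s) \<bullet> X \<omega> + (s - t) \<bullet> X' \<omega>)"
        by (rule arg_cong[where f=ennreal]) (simp add: inner_diff_right inner_diff_left algebra_simps)
      also have "\<dots> \<le> ennreal ((t - s) \<bullet> X \<omega>) + ennreal ((s - t) \<bullet> X' \<omega>)" by (rule ennreal_add_le)
      also have "\<dots> \<le> F (X \<omega>) + F (X' \<omega>)" unfolding F_def
        by (intro add_mono SUP_upper2[OF st(1)] SUP_upper2[OF st(2)] SUP_upper2[OF st(1)] SUP_upper) (auto simp: st)
      finally show "ennreal ((t - s) \<bullet> (X \<omega> - X' \<omega>)) \<le> F (X \<omega>) + F (X' \<omega>)" .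
    qed
    also have "\<dots> = (\<integral>\<^sup>+ \<omega>. F (X \<omega>) \<partial>M) + (\<integral>\<^sup>+ \<omega>. F (X' \<omega>) \<partial>M)"
      by (rule nn_integral_add) auto
    also have "(\<integral>\<^sup>+ \<omega>. F (X' \<omega>) \<partial>M) = (\<integral>\<^sup>+ \<omega>. F (X \<omega>) \<partial>M)"
    proof -
      have "(\<integral>\<^sup>+ \<omega>. F (X' \<omega>) \<partial>M) = (\<integral>\<^sup>+ x. F x \<partial>distr M borel X')"
        by (subst nn_integral_distr) auto
      also have "\<dots> = (\<integral>\<^sup>+ x. F x \<partial>distr M borel X)" by (simp add: dist)
      also have "\<dots> = (\<integral>\<^sup>+ \<omega>. F (X \<omega>) \<partial>M)" by (subst nn_integral_distr) auto
      finally show ?thesis .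
    qed
    finally have le: "ennreal (\<kappa> * (A/2)) \<le> 2 * (\<integral>\<^sup>+ \<omega>. F (X \<omega>) \<partial>M)"
      by (simp add: mult_2)
    have "ennreal (min (1/2) (\<kappa>/4) * A) \<le> (\<integral>\<^sup>+ \<omega>. F (X \<omega>) \<partial>M)"
    proof (cases "(\<integral>\<^sup>+ \<omega>. F (X \<omega>) \<partial>M)" rule: ennreal_cases)
      case (real r)
      have "ennreal (\<kappa> * (A/2)) \<le> ennreal (2 * r)" using le real by (simp add: ennreal_mult)
      then have "\<kappa> * (A/2) \<le> 2 * r" using real by (simp add: ennreal_le_iff)
      then have "min (1/2) (\<kappa>/4) * A \<le> r" using A kp
      proof -
        have "min (1/2) (\<kappa>/4) * A \<le> \<kappa>/4 * A" using A by (intro mult_right_mono) auto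
        then show ?thesis using \<open>\<kappa> * (A/2) \<le> 2 * r\<close> by linarith
      qed
      then show ?thesis using real by (simp add: ennreal_leI)
    qed simp
    then show ?thesis unfolding F_def .
  qed
qed

theorem lemma2p1:
  fixes M :: "'a measure" and X X' :: "'a \<Rightarrow> 'd::euclidean_space"
    and p \<kappa> :: real
  assumes "prob_space M"
    and "p \<ge> 1"
    and "X \<in> borel_measurable M" and "X' \<in> borel_measurable M"
    and "integrable M (\<lambda>\<omega>. norm (X \<omega>) powr p)"
    and "prob_space.indep_var M borel X borel X'"
    and "distr M borel X' = distr M borel X"
    and "\<kappa> > 0"
    and "SMP_p M (\<lambda>\<omega>. X \<omega> - X' \<omega>) p \<kappa>"
  shows "SMP_p M X p (min (1/2) (\<kappa>/4))"
  unfolding SMP_p_def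
proof (intro allI impI)
  fix A :: real and T :: "'d set"
  assume A: "A > 0" and card: "infinite T \<or> exp p \<le> real (card T)"
    and hT: "\<forall>s\<in>T. \<forall>t\<in>T. s \<noteq> t \<longrightarrow> Lp_norm M (\<lambda>\<omega>. (t - s) \<bullet> X \<omega>) p \<ge> A"
  obtain T0 where T0: "T0 \<subseteq> T" "countable T0" "infinite T0 \<or> exp p \<le> real (card T0)"
  proof (cases "finite T")
    case True
    then show ?thesis using that[of T] card by (auto intro: countable_finite)
  next
    case False
    then obtain f :: "nat \<Rightarrow> 'd" where f: "inj f" "range f \<subseteq> T"
      using infinite_countable_subset by blast
    show ?thesis using that[of "range f"] f by (auto simp: range_inj_infinite)
  qed
  have "ennreal (min (1/2) (\<kappa>/4) * A) \<le> (\<integral>\<^sup>+ \<omega>. (\<Squnion>t\<in>T0. \<Squnion>s\<in>T0. ennreal ((t - s) \<bullet> X \<omega>)) \<partial>M)"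
    by (rule main_countable[OF assms A T0(2,3)]) (use hT T0(1) in blast)
  also have "\<dots> \<le> (\<integral>\<^sup>+ \<omega>. (\<Squnion>t\<in>T. \<Squnion>s\<in>T. ennreal ((t - s) \<bullet> X \<omega>)) \<partial>M)"
    using T0(1) by (intro nn_integral_mono SUP_subset_mono) auto
  finally show "ennreal (min (1/2) (\<kappa>/4) * A) \<le> (\<integral>\<^sup>+ \<omega>. (\<Squnion>t\<in>T. \<Squnion>s\<in>T. ennreal ((t - s) \<bullet> X \<omega>)) \<partial>M)" .
qed
end
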